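(* The operator $A:=A_1:\mathcal{X}^+\to\mathcal{X}'$ is monotone: for all $(m,u,h),(\mu,v,k)\in\mathcal{X}^+$, \[ \langle A(m,u,h)-A(\mu,v,k),\,(m-\mu,\,u-v,\,h-k)\rangle\ge0. \]
   Context: Setting. $\Omega\subset\mathbb{R}^d$ is open, bounded, connected, with $C^1$ boundary $\Gamma=\partial\Omega$; $ds$ denotes the surface measure $d\mathcal{H}^{d-1}$. $\Gamma=\overline{\Gamma_D\cup\Gamma_N}$, where $\Gamma_D,\Gamma_N$ are disjoint, nonempty, relatively open $C^1$ $(d-1)$-dimensional manifolds of positive $\mathcal{H}^{d-1}$-measure with $\mathcal{H}^{d-1}(\partial\Gamma_D\cap\partial\Gamma_N)=0$. Boundary values of Sobolev functions are traces. Exponents: $\alpha>1$, $\beta>0$, $\gamma=\frac{\beta+1}{\beta}\alpha$, $\gamma'=\gamma/(\gamma-1)$. Data: $j\in L^{\gamma'}(\Gamma_N)$, $j\ge0$, $j\not\equiv0$. $g:[0,\infty)\to\mathbb{R}$ is continuous and strictly increasing, and there is $C>1$ with $C^{-1}m^\beta-C\le g(m)\le Cm^\beta+C$ for all $m\ge0$. $H:\overline\Omega\times\mathbb{R}^d\to\mathbb{R}$ is measurable in $x$, and for a.e. $x$, $H(x,\cdot)\in C^1(\mathbb{R}^d)$ is convex; there is $C>1$ such that for a.e. $x\in\Omega$ and all $p\in\mathbb{R}^d$: $|D_pH(x,p)|\le C|p|^{\alpha-1}+C$, $H(x,0)\le C$, and one of the following holds: (a) $H(x,p)\ge C^{-1}|p|^\alpha-C$;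 (b) $D_pH(x,p)\cdot p\ge C^{-1}|p|^\alpha-C$ and $H(x,p)\ge -C$; (c) $-H(x,p)+D_pH(x,p)\cdot p\ge C^{-1}|p|^\alpha-C$ and $H(x,p)\ge-C$. Spaces. $\mathcal{X}=L^{\beta+1}(\Omega)\times W^{1,\gamma}(\Omega)\times L^{\gamma'}(\Gamma_D)$, $\mathcal{X}'$ its dual, and $\mathcal{X}^+=\{(m,u,h)\in\mathcal{X}: m\ge0\text{ a.e. in }\Omega,\ h\ge0\text{ a.e. on }\Gamma_D\}$. Operator. For $\epsilon>0$, $(m,u,h)\in\mathcal{X}^+$ and $(\mu,v,k)\in\mathcal{X}$, \[\langle A_\epsilon(m,u,h),(\mu,v,k)\rangle=\int_\Omega(-H(x,Du)+g(m))\mu\,dx+\int_\Omega mD_pH(x,Du)\cdot Dv\,dx-\int_{\Gamma_N}jv\,ds+\int_{\Gamma_D}hv\,ds+\int_{\Gamma_D}(-u+\epsilon^{\gamma'}h^{\gamma'-1})k\,ds.\] *)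

theory Defs
  imports "HOL-Analysis.Analysis"
begin

definition hausdorff_const :: "real \<Rightarrow> real" where
  "hausdorff_const s = pi powr (s / 2) / Gamma (s / 2 + 1)"

text \<open>Contribution of one covering set to the Hausdorff sum; the conventions
  diam(empty)^s = 0 and diam(C)^0 = 1 for nonempty C are made explicit.\<close>
definition hausdorff_term :: "real \<Rightarrow> 'a::metric_space set \<Rightarrow> real" where
  "hausdorff_term s C =
     (if C = {} then 0
      else if s = 0 then 1
      else hausdorff_const s * (diameter C / 2) powr s)"

definition hausdorff_pre :: "real \<Rightarrow> real \<Rightarrow> 'a::metric_space set \<Rightarrow> ennreal" where
  "hausdorff_pre s \<delta> A =
     (INF C \<in> {C :: nat \<Rightarrow> 'a set. A \<subseteq> (\<Union>i. C i) \<and>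
                   (\<forall>i. bounded (C i) \<and> diameter (C i) \<le> \<delta>)}.
        (\<Sum>i. ennreal (hausdorff_term s (C i))))"

definition hausdorff_outer :: "real \<Rightarrow> 'a::metric_space set \<Rightarrow> ennreal" where
  "hausdorff_outer s A = (SUP \<delta> \<in> {0<..}. hausdorff_pre s \<delta> A)"

definition hausdorff_measure :: "real \<Rightarrow> ('a::metric_space) measure" where
  "hausdorff_measure s = measure_of UNIV (sets borel) (hausdorff_outer s)"

definition surface_measure :: "(real^'n) measure" where
  "surface_measure = hausdorff_measure (real CARD('n) - 1)"

definition Lp_on :: "'a measure \<Rightarrow> real \<Rightarrow> ('a \<Rightarrow> real) \<Rightarrow> bool" where
  "Lp_on M p f \<longleftrightarrow> f \<in> borel_measurable M \<and> integrable M (\<lambda>x. \<bar>f x\<bar> powr p)"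

definition C1_with_grad :: "(real^'n \<Rightarrow> real) \<Rightarrow> (real^'n \<Rightarrow> real^'n) \<Rightarrow> bool" where
  "C1_with_grad \<phi> g\<phi> \<longleftrightarrow> continuous_on UNIV g\<phi> \<and>
      (\<forall>x. (\<phi> has_derivative (\<lambda>h. g\<phi> x \<bullet> h)) (at x))"

definition weak_grad :: "(real^'n) set \<Rightarrow> (real^'n \<Rightarrow> real) \<Rightarrow> (real^'n \<Rightarrow> real^'n) \<Rightarrow> bool" where
  "weak_grad \<Omega> u Du \<longleftrightarrow>
     (\<forall>\<phi> g\<phi>. C1_with_grad \<phi> g\<phi> \<and> compact (closure {x. \<phi> x \<noteq> 0}) \<and>
        closure {x. \<phi> x \<noteq> 0} \<subseteq> \<Omega> \<longrightarrow>
        (\<forall>i. integral\<^sup>L (lebesgue_on \<Omega>) (\<lambda>x. u x * g\<phi> x $ i) =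
             - integral\<^sup>L (lebesgue_on \<Omega>) (\<lambda>x. Du x $ i * \<phi> x)))"

definition W1p :: "(real^'n) set \<Rightarrow> real \<Rightarrow> (real^'n \<Rightarrow> real) \<Rightarrow> (real^'n \<Rightarrow> real^'n) \<Rightarrow> bool" where
  "W1p \<Omega> p u Du \<longleftrightarrow> Lp_on (lebesgue_on \<Omega>) p u \<and>
      Du \<in> borel_measurable (lebesgue_on \<Omega>) \<and>
      integrable (lebesgue_on \<Omega>) (\<lambda>x. norm (Du x) powr p) \<and>
      weak_grad \<Omega> u Du"

definition trace_of :: "(real^'n) set \<Rightarrow> real \<Rightarrow> (real^'n \<Rightarrow> real) \<Rightarrow> (real^'n \<Rightarrow> real^'n)
                          \<Rightarrow> (real^'n \<Rightarrow> real) \<Rightarrow> bool" where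
  "trace_of \<Omega> p u Du Tu \<longleftrightarrow>
     Lp_on (restrict_space surface_measure (frontier \<Omega>)) p Tu \<and>
     (\<exists>\<phi> g\<phi>. (\<forall>n. C1_with_grad (\<phi> n) (g\<phi> n)) \<and>
        (\<lambda>n. integral\<^sup>L (lebesgue_on \<Omega>) (\<lambda>x. \<bar>\<phi> n x - u x\<bar> powr p)) \<longlonglongrightarrow> 0 \<and>
        (\<lambda>n. integral\<^sup>L (lebesgue_on \<Omega>) (\<lambda>x. norm (g\<phi> n x - Du x) powr p)) \<longlonglongrightarrow> 0 \<and>
        (\<lambda>n. integral\<^sup>L (restrict_space surface_measure (frontier \<Omega>))
                (\<lambda>x. \<bar>\<phi> n x - Tu x\<bar> powr p)) \<longlonglongrightarrow> 0)"

definition C1_boundary :: "(real^'n) set \<Rightarrow> bool" where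
  "C1_boundary \<Omega> \<longleftrightarrow>
     (\<forall>x0 \<in> frontier \<Omega>. \<exists>U \<psi> g\<psi>. open U \<and> x0 \<in> U \<and> continuous_on U g\<psi> \<and>
        (\<forall>x\<in>U. (\<psi> has_derivative (\<lambda>h. g\<psi> x \<bullet> h)) (at x) \<and> g\<psi> x \<noteq> 0) \<and>
        \<Omega> \<inter> U = {x\<in>U. \<psi> x < 0})"

definition in_Xplus :: "(real^'n) set \<Rightarrow> (real^'n) set \<Rightarrow> real \<Rightarrow> real \<Rightarrow> real
     \<Rightarrow> (real^'n \<Rightarrow> real) \<Rightarrow> (real^'n \<Rightarrow> real) \<Rightarrow> (real^'n \<Rightarrow> real^'n) \<Rightarrow> (real^'n \<Rightarrow> real)
     \<Rightarrow> (real^'n \<Rightarrow> real) \<Rightarrow> bool" where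
  "in_Xplus \<Omega> \<Gamma>D \<beta> \<gamma> \<gamma>' m u Du Tu h \<longleftrightarrow>
     Lp_on (lebesgue_on \<Omega>) (\<beta> + 1) m \<and> W1p \<Omega> \<gamma> u Du \<and> trace_of \<Omega> \<gamma> u Du Tu \<and>
     Lp_on (restrict_space surface_measure \<Gamma>D) \<gamma>' h \<and>
     (AE x in lebesgue_on \<Omega>. m x \<ge> 0) \<and>
     (AE x in restrict_space surface_measure \<Gamma>D. h x \<ge> 0)"

text \<open>The pairing of A_eps(m,u,h) with a test triple (mu,v,k); the test
  function v enters only through its weak gradient Dv and its trace Tv.\<close>
definition A_pairing :: "(real^'n) set \<Rightarrow> (real^'n) set \<Rightarrow> (real^'n) set
     \<Rightarrow> (real^'n \<Rightarrow> real^'n \<Rightarrow> real) \<Rightarrow> (real^'n \<Rightarrow> real^'n \<Rightarrow> real^'n) \<Rightarrow> (real \<Rightarrow> real)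
     \<Rightarrow> (real^'n \<Rightarrow> real) \<Rightarrow> real \<Rightarrow> real
     \<Rightarrow> (real^'n \<Rightarrow> real) \<Rightarrow> (real^'n \<Rightarrow> real^'n) \<Rightarrow> (real^'n \<Rightarrow> real) \<Rightarrow> (real^'n \<Rightarrow> real)
     \<Rightarrow> (real^'n \<Rightarrow> real) \<Rightarrow> (real^'n \<Rightarrow> real^'n) \<Rightarrow> (real^'n \<Rightarrow> real) \<Rightarrow> (real^'n \<Rightarrow> real)
     \<Rightarrow> real" where
  "A_pairing \<Omega> \<Gamma>N \<Gamma>D H DpH g j \<gamma>' \<epsilon> m Du Tu h \<mu> Dv Tv k =
      integral\<^sup>L (lebesgue_on \<Omega>) (\<lambda>x. (- H x (Du x) + g (m x)) * \<mu> x)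
    + integral\<^sup>L (lebesgue_on \<Omega>) (\<lambda>x. m x * (DpH x (Du x) \<bullet> Dv x))
    - integral\<^sup>L (restrict_space surface_measure \<Gamma>N) (\<lambda>x. j x * Tv x)
    + integral\<^sup>L (restrict_space surface_measure \<Gamma>D) (\<lambda>x. h x * Tv x)
    + integral\<^sup>L (restrict_space surface_measure \<Gamma>D)
        (\<lambda>x. (- Tu x + \<epsilon> powr \<gamma>' * h x powr (\<gamma>' - 1)) * k x)"

end

theory Submission
  imports Defs
begin


lemma young3E:
  fixes a b c x y z P Q R E :: real
  assumes "a \<ge> 0" "b \<ge> 0" "c \<ge> 0" "x \<ge> 0" "y \<ge> 0" "z \<ge> 0" "P > 0" "Q > 0" "R > 0"
    "x / P + y / Q + z / R \<le> 1"
    "a powr P \<le> E" "b powr Q \<le> E" "c powr R \<le> E" "1 \<le> E"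
  shows "a powr x * b powr y * c powr z \<le> E"
proof -
  have "a powr x = (a powr P) powr (x / P)" using assms by (simp add: powr_powr)
  also have "\<dots> \<le> E powr (x / P)" using assms by (intro powr_mono2) auto
  finally have 1: "a powr x \<le> E powr (x / P)" .
  have "b powr y = (b powr Q) powr (y / Q)" using assms by (simp add: powr_powr)
  also have "\<dots> \<le> E powr (y / Q)" using assms by (intro powr_mono2) auto
  finally have 2: "b powr y \<le> E powr (y / Q)" .
  have "c powr z = (c powr R) powr (z / R)" using assms by (simp add: powr_powr)
  also have "\<dots> \<le> E powr (z / R)" using assms by (intro powr_mono2) auto
  finally have 3: "c powr z \<le> E powr (z / R)" .
  have "a powr x * b powr y * c powr z \<le> E powr (x / P) * E powr (y / Q) * E powr (z / R)"
    using 1 2 3 by (intro mult_mono) auto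
  also have "\<dots> = E powr (x / P + y / Q + z / R)" using assms by (simp add: powr_add)
  also have "\<dots> \<le> E powr 1" using assms by (intro powr_mono) auto
  finally show ?thesis using assms by simp
qed

lemma young2E:
  fixes a b x y P Q E :: real
  assumes "a \<ge> 0" "b \<ge> 0" "x \<ge> 0" "y \<ge> 0" "P > 0" "Q > 0"
    "x / P + y / Q = 1"
    "a powr P \<le> E" "b powr Q \<le> E"
  shows "a powr x * b powr y \<le> E"
proof (cases "E = 0")
  case True
  then have "a = 0" using assms by (smt (verit) powr_gt_zero)
  then show ?thesis using True by simp
next
  case False
  then have E: "E > 0" using assms by (smt (verit) powr_ge_zero)
  have "a powr x = (a powr P) powr (x / P)" using assms by (simp add: powr_powr)
  also have "\<dots> \<le> E powr (x / P)" using assms by (intro powr_mono2) auto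
  finally have 1: "a powr x \<le> E powr (x / P)" .
  have "b powr y = (b powr Q) powr (y / Q)" using assms by (simp add: powr_powr)
  also have "\<dots> \<le> E powr (y / Q)" using assms by (intro powr_mono2) auto
  finally have 2: "b powr y \<le> E powr (y / Q)" .
  have "a powr x * b powr y \<le> E powr (x / P) * E powr (y / Q)"
    using 1 2 by (intro mult_mono) auto
  also have "\<dots> = E powr (x / P + y / Q)" using E by (simp add: powr_add)
  finally show ?thesis using assms E by simp
qed

lemma line_deriv:
  fixes f :: "'a::real_normed_vector \<Rightarrow> real"
  assumes "(f has_derivative (\<lambda>q. D q)) (at p)" "linear D"
  shows "((\<lambda>t. f (p + t *\<^sub>R w)) has_field_derivative D w) (at 0)"
proof -
  have l: "((\<lambda>t::real. p + t *\<^sub>R w) has_derivative (\<lambda>t. t *\<^sub>R w)) (at 0)"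
    by (auto intro!: derivative_eq_intros)
  have "((\<lambda>t. f (p + t *\<^sub>R w)) has_derivative (\<lambda>t. D (t *\<^sub>R w))) (at 0)"
    using has_derivative_compose[OF l, of f D] assms(1) by simp
  moreover have "(\<lambda>t. D (t *\<^sub>R w)) = (*) (D w)"
    using assms(2) by (auto simp: linear_scale)
  ultimately show ?thesis by (simp add: has_field_derivative_def)
qed

lemma tangent_ineq:
  fixes f :: "'a::real_normed_vector \<Rightarrow> real"
  assumes cv: "convex_on UNIV f" and d: "(f has_derivative (\<lambda>q. D q)) (at p)" "linear D"
  shows "f q \<ge> f p + D (q - p)"
proof -
  define \<phi> where "\<phi> t = f (p + t *\<^sub>R (q - p))" for t
  have "convex_on UNIV \<phi>"
  proof (rule convex_onI)
    fix t x y :: real assume t: "t > 0" "t < 1"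
    have "p + ((1 - t) * x + t * y) *\<^sub>R (q - p) = (1 - t) *\<^sub>R (p + x *\<^sub>R (q - p)) + t *\<^sub>R (p + y *\<^sub>R (q - p))"
      by (simp add: algebra_simps)
    then show "\<phi> ((1 - t) *\<^sub>R x + t *\<^sub>R y) \<le> (1 - t) * \<phi> x + t * \<phi> y"
      unfolding \<phi>_def using convex_onD[OF cv, of t] t by simp
  qed simp
  moreover have "(\<phi> has_field_derivative D (q - p)) (at 0 within UNIV)"
    unfolding \<phi>_def using line_deriv[OF d] by simp
  ultimately have "\<phi> 1 - \<phi> 0 \<ge> D (q - p) * (1 - 0)"
    by (intro convex_on_imp_above_tangent[where A=UNIV]) auto
  then show ?thesis by (simp add: \<phi>_def)
qed

lemma dir_seq:
  fixes f :: "'a::real_normed_vector \<Rightarrow> real"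
  assumes d: "(f has_derivative (\<lambda>q. D q)) (at p)" "linear D"
  shows "(\<lambda>n. real (Suc n) * (f (p + inverse (real (Suc n)) *\<^sub>R w) - f p)) \<longlonglongrightarrow> D w"
proof -
  have "((\<lambda>t. (f (p + t *\<^sub>R w) - f (p + 0 *\<^sub>R w)) / (t - 0)) \<longlongrightarrow> D w) (at 0)"
    using line_deriv[OF d, of w] unfolding has_field_derivative_iff by simp
  moreover have "filterlim (\<lambda>n. inverse (real (Suc n))) (at 0) sequentially"
    unfolding filterlim_at using LIMSEQ_inverse_real_of_nat by auto
  ultimately have "(\<lambda>n. (f (p + inverse (real (Suc n)) *\<^sub>R w) - f (p + 0 *\<^sub>R w)) / (inverse (real (Suc n)) - 0)) \<longlonglongrightarrow> D w"
    by (rule filterlim_compose)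
  then show ?thesis by (simp add: divide_inverse mult.commute)
qed



lemma complete_lebesgue_on:
  assumes S: "S \<in> sets lebesgue"
  shows "complete_measure (lebesgue_on S)"
proof
  fix A B assume BA: "B \<subseteq> A" and A: "A \<in> null_sets (lebesgue_on S)"
  then have "A \<subseteq> S" "A \<in> null_sets lebesgue" using null_sets_restrict_space[OF S] by auto
  then have "B \<in> null_sets lebesgue" using BA completion.complete2 by blast
  then show "B \<in> sets (lebesgue_on S)" using BA \<open>A \<subseteq> S\<close>
    by (auto simp: sets_restrict_space_iff S)
qed

lemma measurable_AE_cong:
  assumes c: "complete_measure M" and f: "f \<in> borel_measurable M" and ae: "AE x in M. f x = g x"
  shows "g \<in> borel_measurable M"
proof (rule measurableI)
  fix A :: "'b set" assume A: "A \<in> sets borel"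
  have "AE x in M. x \<in> f -` A \<inter> space M \<longleftrightarrow> x \<in> g -` A \<inter> space M"
    using ae by eventually_elim auto
  moreover have "f -` A \<inter> space M \<in> sets M" using f A by (rule measurable_sets)
  ultimately show "g -` A \<inter> space M \<in> sets M"
    using complete_measure.in_sets_AE[OF c] by blast
qed auto

lemma measurable_AE_lim:
  fixes F :: "nat \<Rightarrow> 'a \<Rightarrow> 'b::{banach, second_countable_topology}"
  assumes c: "complete_measure M" and f: "\<And>n. F n \<in> borel_measurable M"
    and ae: "AE x in M. (\<lambda>n. F n x) \<longlonglongrightarrow> g x"
  shows "g \<in> borel_measurable M"
proof (rule measurable_AE_cong[OF c])
  show "(\<lambda>x. lim (\<lambda>n. F n x)) \<in> borel_measurable M" using f by measurable
  show "AE x in M. lim (\<lambda>n. F n x) = g x" using ae by eventually_elim (simp add: limI)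
qed

lemma floor_approx:
  fixes y :: real
  shows "(\<lambda>n. real_of_int \<lfloor>real (Suc n) * y\<rfloor> / real (Suc n)) \<longlonglongrightarrow> y"
proof -
  have b: "\<bar>real_of_int \<lfloor>real (Suc n) * y\<rfloor> / real (Suc n) - y\<bar> \<le> inverse (real (Suc n))" for n
  proof -
    have "real (Suc n) * y - 1 \<le> real_of_int \<lfloor>real (Suc n) * y\<rfloor>" "real_of_int \<lfloor>real (Suc n) * y\<rfloor> \<le> real (Suc n) * y"
      by linarith+
    moreover have "y - inverse (real (Suc n)) = (real (Suc n) * y - 1) / real (Suc n)"
      "y = (real (Suc n) * y) / real (Suc n)" by (auto simp: field_simps)
    ultimately have "y - inverse (real (Suc n)) \<le> real_of_int \<lfloor>real (Suc n) * y\<rfloor> / real (Suc n)"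
       "real_of_int \<lfloor>real (Suc n) * y\<rfloor> / real (Suc n) \<le> y"
      by (metis divide_right_mono of_nat_0_le_iff)+
    then show ?thesis by linarith
  qed
  show ?thesis
  proof (rule tendsto_sandwich[where f="\<lambda>n. y - inverse (real (Suc n))" and h="\<lambda>n. y + inverse (real (Suc n))"])
    show "\<forall>\<^sub>F n in sequentially. y - inverse (real (Suc n)) \<le> real_of_int \<lfloor>real (Suc n) * y\<rfloor> / real (Suc n)" (is "\<forall>\<^sub>F n in _. ?P n")
    proof (intro always_eventually allI)
      fix n show "?P n" using b[of n] unfolding abs_le_iff by linarith
    qed
    show "\<forall>\<^sub>F n in sequentially. real_of_int \<lfloor>real (Suc n) * y\<rfloor> / real (Suc n) \<le> y + inverse (real (Suc n))" (is "\<forall>\<^sub>F n in _. ?P n")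
    proof (intro always_eventually allI)
      fix n show "?P n" using b[of n] unfolding abs_le_iff by linarith
    qed
    show "(\<lambda>n. y - inverse (real (Suc n))) \<longlonglongrightarrow> y"
      using tendsto_diff[OF tendsto_const LIMSEQ_inverse_real_of_nat, of y] by simp
    show "(\<lambda>n. y + inverse (real (Suc n))) \<longlonglongrightarrow> y"
      using tendsto_add[OF tendsto_const LIMSEQ_inverse_real_of_nat, of y] by simp
  qed
qed

lemma caratheodory:
  fixes H :: "'a \<Rightarrow> real^'n \<Rightarrow> real" and F :: "'a \<Rightarrow> real^'n"
  assumes c: "complete_measure M" and Hm: "\<And>p. (\<lambda>x. H x p) \<in> borel_measurable M"
    and Hc: "AE x in M. continuous_on UNIV (H x)"
    and F[measurable]: "F \<in> borel_measurable M"
  shows "(\<lambda>x. H x (F x)) \<in> borel_measurable M"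
proof -
  define emb :: "nat \<Rightarrow> ('n \<Rightarrow> int) \<Rightarrow> real^'n" where
    "emb n a = (\<chi> i. real_of_int (a i) / real (Suc n))" for n a
  define kk :: "nat \<Rightarrow> 'a \<Rightarrow> ('n \<Rightarrow> int)" where
    "kk n x = (\<lambda>i. \<lfloor>real (Suc n) * F x $ i\<rfloor>)" for n x
  have [measurable]: "(\<lambda>x. F x $ i) \<in> borel_measurable M" for i
  proof -
    have "(\<lambda>v::real^'n. v $ i) \<in> borel_measurable borel"
      by (intro borel_measurable_continuous_onI continuous_intros)
    then show ?thesis using measurable_compose[OF F] by blast
  qed
  have kkm: "kk n \<in> measurable M (count_space UNIV)" for n
  proof -
    have "kk n -` {a} \<inter> space M \<in> sets M" for a
    proof -
      have "kk n -` {a} \<inter> space M = {x\<in>space M. \<forall>i. \<lfloor>real (Suc n) * F x $ i\<rfloor> = a i}"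
        by (auto simp: kk_def)
      also have "\<dots> \<in> sets M" by measurable
      finally show ?thesis .
    qed
    then show ?thesis by (auto simp: measurable_count_space_eq2_countable)
  qed
  have Gm: "(\<lambda>x. H x (emb n (kk n x))) \<in> borel_measurable M" for n
    using measurable_compose_countable[OF _ kkm, of "\<lambda>a x. H x (emb n a)"] Hm by auto
  have conv: "(\<lambda>n. emb n (kk n x)) \<longlonglongrightarrow> F x" for x
    unfolding emb_def kk_def by (intro vec_tendstoI) (simp only: vec_lambda_beta floor_approx)
  show ?thesis
  proof (rule measurable_AE_lim[OF c Gm])
    show "AE x in M. (\<lambda>n. H x (emb n (kk n x))) \<longlonglongrightarrow> H x (F x)"
      using Hc
    proof eventually_elim
      case (elim x)
      then show ?case using conv[of x]
        by (intro continuous_on_tendsto_compose[OF elim]) auto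
    qed
  qed
qed



lemma expo_facts:
  fixes \<alpha> \<beta> \<gamma> :: real
  assumes "\<alpha> > 1" "\<beta> > 0" "\<gamma> = (\<beta> + 1) / \<beta> * \<alpha>"
  shows "\<alpha> / \<gamma> + 1 / (\<beta> + 1) + 0 / 1 \<le> 1" "(\<alpha> - 1) / \<gamma> + 1 / \<gamma> + 1 / (\<beta> + 1) \<le> 1"
    "1 / \<gamma> + 1 / (\<beta> + 1) + 0 / 1 \<le> 1" "\<beta> / (\<beta> + 1) + 1 / (\<beta> + 1) + 0 / 1 \<le> 1"
    "1 / (\<beta> + 1) + 0 / 1 + 0 / 1 \<le> 1" "\<gamma> > 1"
proof -
  have g: "\<gamma> > 0" using assms by simp
  have e: "\<alpha> * (\<beta> + 1) = \<beta> * \<gamma>" using assms by (simp add: field_simps)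
  have a: "\<alpha> / \<gamma> = \<beta> / (\<beta> + 1)" using assms g e by (simp add: frac_eq_eq)
  have s: "\<alpha> / \<gamma> + 1 / (\<beta> + 1) = 1" using a assms by (simp add: add_divide_distrib[symmetric])
  show "\<alpha> / \<gamma> + 1 / (\<beta> + 1) + 0 / 1 \<le> 1" using s by simp
  have "(\<alpha> - 1) / \<gamma> + 1 / \<gamma> = \<alpha> / \<gamma>" by (simp add: diff_divide_distrib)
  then show "(\<alpha> - 1) / \<gamma> + 1 / \<gamma> + 1 / (\<beta> + 1) \<le> 1" using s by linarith
  have "1 / \<gamma> \<le> \<alpha> / \<gamma>" using assms g by (intro divide_right_mono) auto
  then show "1 / \<gamma> + 1 / (\<beta> + 1) + 0 / 1 \<le> 1" using s by linarith
  show "\<beta> / (\<beta> + 1) + 1 / (\<beta> + 1) + 0 / 1 \<le> 1" using assms by (simp add: field_simps)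
  show "1 / (\<beta> + 1) + 0 / 1 + 0 / 1 \<le> 1" using assms by (simp add: field_simps)
  have "(\<beta> + 1) / \<beta> > 1" using assms by (simp add: field_simps)
  then show "\<gamma> > 1" using assms by (smt (verit) mult_less_cancel_left1 mult_less_cancel_right1)
qed

lemma H_bound:
  fixes Hx :: "real^'n \<Rightarrow> real"
  assumes cv: "convex_on UNIV Hx" and d: "\<forall>p. (Hx has_derivative (\<lambda>q. D p \<bullet> q)) (at p)"
    and nD: "norm (D p) \<le> Ch * norm p powr (\<alpha> - 1) + Ch" and H0: "Hx 0 \<le> Ch" and lo: "Hx p \<ge> - Ch"
    and Ch: "Ch > 0"
  shows "\<bar>Hx p\<bar> \<le> Ch * (2 + norm p powr \<alpha> + norm p)"
proof -
  have "Hx 0 \<ge> Hx p + D p \<bullet> (0 - p)"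
    using tangent_ineq[OF cv, of "\<lambda>q. D p \<bullet> q" p 0] d by (simp add: linear_iff inner_add_right)
  then have "Hx p \<le> Ch + D p \<bullet> p" using H0 by simp
  also have "D p \<bullet> p \<le> norm (D p) * norm p" by (rule norm_cauchy_schwarz)
  also have "\<dots> \<le> (Ch * norm p powr (\<alpha> - 1) + Ch) * norm p" using nD by (intro mult_right_mono) auto
  also have "\<dots> = Ch * (norm p powr (\<alpha> - 1) * norm p) + Ch * norm p" by (simp add: algebra_simps)
  also have "norm p powr (\<alpha> - 1) * norm p = norm p powr \<alpha>"
  proof (cases "p = 0")
    case False
    have "norm p powr (\<alpha> - 1) * norm p powr 1 = norm p powr (\<alpha> - 1 + 1)" by (rule powr_add[symmetric])
    then show ?thesis using False by simp
  qed simp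
  finally have u: "Hx p \<le> Ch + Ch * norm p powr \<alpha> + Ch * norm p" by simp
  have nn: "Ch * norm p powr \<alpha> \<ge> 0" "Ch * norm p \<ge> 0" using Ch by auto
  have "Ch * (2 + norm p powr \<alpha> + norm p) = 2 * Ch + Ch * norm p powr \<alpha> + Ch * norm p" by (simp add: algebra_simps)
  then show ?thesis using u nn lo Ch unfolding abs_le_iff by linarith
qed

lemma f1_bound:
  fixes a b n d Hv gv Ch Cg E \<alpha> \<beta> \<gamma> :: real
  assumes ex: "\<alpha> > 1" "\<beta> > 0" "\<gamma> = (\<beta> + 1) / \<beta> * \<alpha>"
    and pos: "a \<ge> 0" "b \<ge> 0" "n \<ge> 0" "Ch > 0" "Cg > 0"
    and Hb: "\<bar>Hv\<bar> \<le> Ch * (2 + n powr \<alpha> + n)" and gb: "\<bar>gv\<bar> \<le> Cg * (a powr \<beta> + 1)"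
    and db: "\<bar>d\<bar> \<le> a + b"
    and E: "a powr (\<beta> + 1) \<le> E" "b powr (\<beta> + 1) \<le> E" "n powr \<gamma> \<le> E" "1 \<le> E"
  shows "\<bar>(- Hv + gv) * d\<bar> \<le> 12 * (Ch + Cg) * E"
proof -
  note ef = expo_facts[OF ex]
  have g0: "\<gamma> > 0" using ef by simp
  have E1: "(1::real) powr 1 \<le> E" using E by simp
  have m1: "n powr \<alpha> * a \<le> E" using young3E[of n a 1 \<alpha> 1 0 \<gamma> "\<beta>+1" 1 E] pos ex ef E E1 by simp
  have m2: "n powr \<alpha> * b \<le> E" using young3E[of n b 1 \<alpha> 1 0 \<gamma> "\<beta>+1" 1 E] pos ex ef E E1 by simp
  have m3: "n * a \<le> E" using young3E[of n a 1 1 1 0 \<gamma> "\<beta>+1" 1 E] pos ex ef E E1 by simp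
  have m4: "n * b \<le> E" using young3E[of n b 1 1 1 0 \<gamma> "\<beta>+1" 1 E] pos ex ef E E1 by simp
  have m5: "a powr \<beta> * a \<le> E" using young3E[of a a 1 \<beta> 1 0 "\<beta>+1" "\<beta>+1" 1 E] pos ex ef E E1 by simp
  have m6: "a powr \<beta> * b \<le> E" using young3E[of a b 1 \<beta> 1 0 "\<beta>+1" "\<beta>+1" 1 E] pos ex ef E E1 by simp
  have m7: "a \<le> E" using young3E[of a 1 1 1 0 0 "\<beta>+1" 1 1 E] pos ex ef E E1 by simp
  have m8: "b \<le> E" using young3E[of b 1 1 1 0 0 "\<beta>+1" 1 1 E] pos ex ef E E1 by simp
  have X: "((2 + n powr \<alpha> + n) + (a powr \<beta> + 1)) * (a + b) \<le> 12 * E"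
    using m1 m2 m3 m4 m5 m6 m7 m8 by (simp add: algebra_simps)
  have "\<bar>(- Hv + gv) * d\<bar> \<le> (\<bar>Hv\<bar> + \<bar>gv\<bar>) * (a + b)"
    unfolding abs_mult using db by (intro mult_mono) auto
  also have "\<dots> \<le> (Ch * (2 + n powr \<alpha> + n) + Cg * (a powr \<beta> + 1)) * (a + b)"
    using Hb gb pos by (intro mult_right_mono) auto
  also have "\<dots> \<le> ((Ch + Cg) * ((2 + n powr \<alpha> + n) + (a powr \<beta> + 1))) * (a + b)"
  proof (intro mult_right_mono)
    have "0 \<le> 2 + n powr \<alpha> + n" "0 \<le> a powr \<beta> + 1" using pos by auto
    then show "Ch * (2 + n powr \<alpha> + n) + Cg * (a powr \<beta> + 1) \<le> (Ch + Cg) * ((2 + n powr \<alpha> + n) + (a powr \<beta> + 1))"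
      using pos by (simp add: algebra_simps)
  qed (use pos in auto)
  also have "\<dots> = (Ch + Cg) * (((2 + n powr \<alpha> + n) + (a powr \<beta> + 1)) * (a + b))" by simp
  also have "\<dots> \<le> (Ch + Cg) * (12 * E)" using X pos by (intro mult_left_mono) auto
  also have "\<dots> = 12 * (Ch + Cg) * E" by (simp add: algebra_simps)
  finally show ?thesis .
qed

lemma f2_bound:
  fixes a na nb Dp w Ch E \<alpha> \<beta> \<gamma>
  assumes ex: "\<alpha> > 1" "\<beta> > 0" "\<gamma> = (\<beta> + 1) / \<beta> * \<alpha>"
    and pos: "(a::real) \<ge> 0" "na \<ge> 0" "nb \<ge> 0" "Ch > 0"
    and nD: "norm (Dp::real^'n) \<le> Ch * na powr (\<alpha> - 1) + Ch" and nw: "norm w \<le> na + nb"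
    and E: "a powr (\<beta> + 1) \<le> E" "na powr \<gamma> \<le> E" "nb powr \<gamma> \<le> E" "1 \<le> E"
  shows "\<bar>a * (Dp \<bullet> w)\<bar> \<le> 4 * Ch * E"
proof -
  note ef = expo_facts[OF ex]
  have E1: "(1::real) powr 1 \<le> E" using E by simp
  have m1: "na powr (\<alpha> - 1) * na * a \<le> E" using young3E[of na na a "\<alpha>-1" 1 1 \<gamma> \<gamma> "\<beta>+1" E] pos ex ef E by simp
  have m2: "na powr (\<alpha> - 1) * nb * a \<le> E" using young3E[of na nb a "\<alpha>-1" 1 1 \<gamma> \<gamma> "\<beta>+1" E] pos ex ef E by simp
  have m3: "na * a \<le> E" using young3E[of na a 1 1 1 0 \<gamma> "\<beta>+1" 1 E] pos ex ef E E1 by simp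
  have m4: "nb * a \<le> E" using young3E[of nb a 1 1 1 0 \<gamma> "\<beta>+1" 1 E] pos ex ef E E1 by simp
  have X: "(na powr (\<alpha> - 1) + 1) * (na + nb) * a \<le> 4 * E"
    using m1 m2 m3 m4 by (simp add: algebra_simps)
  have "\<bar>a * (Dp \<bullet> w)\<bar> \<le> a * (norm Dp * norm w)"
    using pos by (simp add: abs_mult Cauchy_Schwarz_ineq2 mult_left_mono)
  also have "\<dots> \<le> a * ((Ch * na powr (\<alpha> - 1) + Ch) * (na + nb))"
    using nD nw pos by (intro mult_left_mono mult_mono) auto
  also have "\<dots> = Ch * ((na powr (\<alpha> - 1) + 1) * (na + nb) * a)" by (simp add: algebra_simps)
  also have "\<dots> \<le> Ch * (4 * E)" using X pos by (intro mult_left_mono) auto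
  finally show ?thesis by simp
qed

lemma bd_bounds:
  fixes hv kv tu tv \<gamma> \<gamma>' E :: real
  assumes "\<gamma> > 1" "\<gamma>' = \<gamma> / (\<gamma> - 1)" "hv \<ge> 0" "kv \<ge> 0"
    "E = \<bar>hv\<bar> powr \<gamma>' + \<bar>kv\<bar> powr \<gamma>' + \<bar>tu\<bar> powr \<gamma> + \<bar>tv\<bar> powr \<gamma>"
  shows "\<bar>hv * (tu - tv)\<bar> \<le> 2 * E" "\<bar>kv * (tu - tv)\<bar> \<le> 2 * E"
    "\<bar>(- tu + 1 powr \<gamma>' * hv powr (\<gamma>' - 1)) * (hv - kv)\<bar> \<le> 4 * E"
    "\<bar>(- tv + 1 powr \<gamma>' * kv powr (\<gamma>' - 1)) * (hv - kv)\<bar> \<le> 4 * E"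
proof -
  have "\<gamma> / (\<gamma> - 1) = 1 + 1 / (\<gamma> - 1)" using assms(1) by (simp add: field_simps)
  then have "\<gamma>' = 1 + 1 / (\<gamma> - 1)" using assms by simp
  moreover have "1 / (\<gamma> - 1) > 0" using assms by simp
  ultimately have g1: "\<gamma>' > 1" by linarith
  have "1 / \<gamma>' = (\<gamma> - 1) / \<gamma>" using assms(2) by simp
  moreover have "(\<gamma> - 1) / \<gamma> + 1 / \<gamma> = 1" using assms(1) by (simp add: add_divide_distrib[symmetric])
  ultimately have e1: "1 / \<gamma>' + 1 / \<gamma> = 1" by simp
  have e2: "(\<gamma>' - 1) / \<gamma>' + 1 / \<gamma>' = 1" using g1 by (simp add: field_simps)
  have P: "\<bar>tu\<bar> powr \<gamma> \<le> E" "\<bar>tv\<bar> powr \<gamma> \<le> E" "hv powr \<gamma>' \<le> E" "kv powr \<gamma>' \<le> E"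
    using assms by auto
  have E0: "E \<ge> 0" using assms by simp
  have y: "\<And>a b. a \<ge> 0 \<Longrightarrow> b \<ge> 0 \<Longrightarrow> a powr \<gamma>' \<le> E \<Longrightarrow> b powr \<gamma> \<le> E \<Longrightarrow> a * b \<le> E"
    using young2E[of _ _ 1 1 \<gamma>' \<gamma> E] e1 g1 assms(1) by simp
  have y2: "\<And>a b. a \<ge> 0 \<Longrightarrow> b \<ge> 0 \<Longrightarrow> a powr \<gamma>' \<le> E \<Longrightarrow> b powr \<gamma>' \<le> E \<Longrightarrow> a powr (\<gamma>' - 1) * b \<le> E"
    using young2E[of _ _ "\<gamma>' - 1" 1 \<gamma>' \<gamma>' E] e2 g1 by simp
  have a1: "hv * \<bar>tu\<bar> \<le> E" "hv * \<bar>tv\<bar> \<le> E" "kv * \<bar>tu\<bar> \<le> E" "kv * \<bar>tv\<bar> \<le> E"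
    using y P assms by auto
  have a2: "hv powr (\<gamma>' - 1) * hv \<le> E" "hv powr (\<gamma>' - 1) * kv \<le> E"
     "kv powr (\<gamma>' - 1) * hv \<le> E" "kv powr (\<gamma>' - 1) * kv \<le> E"
    using y2 P assms by auto
  have ab: "\<bar>tu - tv\<bar> \<le> \<bar>tu\<bar> + \<bar>tv\<bar>" "\<bar>hv - kv\<bar> \<le> hv + kv" using assms by auto
  show "\<bar>hv * (tu - tv)\<bar> \<le> 2 * E"
  proof -
    have "\<bar>hv * (tu - tv)\<bar> \<le> hv * (\<bar>tu\<bar> + \<bar>tv\<bar>)" using ab assms by (simp add: abs_mult mult_left_mono)
    then show ?thesis using a1 by (simp add: algebra_simps)
  qed
  show "\<bar>kv * (tu - tv)\<bar> \<le> 2 * E"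
  proof -
    have "\<bar>kv * (tu - tv)\<bar> \<le> kv * (\<bar>tu\<bar> + \<bar>tv\<bar>)" using ab assms by (simp add: abs_mult mult_left_mono)
    then show ?thesis using a1 by (simp add: algebra_simps)
  qed
  show "\<bar>(- tu + 1 powr \<gamma>' * hv powr (\<gamma>' - 1)) * (hv - kv)\<bar> \<le> 4 * E"
  proof -
    have "\<bar>(- tu + 1 powr \<gamma>' * hv powr (\<gamma>' - 1)) * (hv - kv)\<bar> \<le> (\<bar>tu\<bar> + hv powr (\<gamma>' - 1)) * (hv + kv)"
    proof -
      have p: "hv powr (\<gamma>' - 1) \<ge> 0" by simp
      have "\<bar>- tu + 1 powr \<gamma>' * hv powr (\<gamma>' - 1)\<bar> \<le> \<bar>tu\<bar> + hv powr (\<gamma>' - 1)"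
        using abs_triangle_ineq[of "- tu" "hv powr (\<gamma>' - 1)"] p by simp
      then show ?thesis unfolding abs_mult using ab by (intro mult_mono) auto
    qed
    then show ?thesis using a1 a2 by (simp add: algebra_simps)
  qed
  show "\<bar>(- tv + 1 powr \<gamma>' * kv powr (\<gamma>' - 1)) * (hv - kv)\<bar> \<le> 4 * E"
  proof -
    have "\<bar>(- tv + 1 powr \<gamma>' * kv powr (\<gamma>' - 1)) * (hv - kv)\<bar> \<le> (\<bar>tv\<bar> + kv powr (\<gamma>' - 1)) * (hv + kv)"
    proof -
      have p: "kv powr (\<gamma>' - 1) \<ge> 0" by simp
      have "\<bar>- tv + 1 powr \<gamma>' * kv powr (\<gamma>' - 1)\<bar> \<le> \<bar>tv\<bar> + kv powr (\<gamma>' - 1)"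
        using abs_triangle_ineq[of "- tv" "kv powr (\<gamma>' - 1)"] p by simp
      then show ?thesis unfolding abs_mult using ab by (intro mult_mono) auto
    qed
    then show ?thesis using a1 a2 by (simp add: algebra_simps)
  qed
qed

lemma key_pt:
  fixes Hx :: "real^'n \<Rightarrow> real"
  assumes cv: "convex_on UNIV Hx" and d: "\<forall>p. (Hx has_derivative (\<lambda>q. D p \<bullet> q)) (at p)"
    and a: "a \<ge> 0" "b \<ge> 0" and gm: "(ga - gb) * (a - b) \<ge> 0"
  shows "(- Hx u + ga) * (a - b) + a * (D u \<bullet> (u - v)) - ((- Hx v + gb) * (a - b) + b * (D v \<bullet> (u - v))) \<ge> 0"
proof -
  have lin: "linear (\<lambda>q. D p \<bullet> q)" for p by (simp add: linear_iff inner_add_right)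
  have t1: "Hx v \<ge> Hx u + D u \<bullet> (v - u)" using tangent_ineq[OF cv _ lin] d by blast
  have t2: "Hx u \<ge> Hx v + D v \<bullet> (u - v)" using tangent_ineq[OF cv _ lin] d by blast
  have e: "D u \<bullet> (v - u) = - (D u \<bullet> (u - v))" by (simp add: inner_diff_right)
  have "a * (Hx v - Hx u + D u \<bullet> (u - v)) \<ge> 0" using t1 e a by simp
  moreover have "b * (Hx u - Hx v - D v \<bullet> (u - v)) \<ge> 0" using t2 a by simp
  ultimately show ?thesis using gm by (simp add: algebra_simps)
qed

lemma g_mono_prod:
  assumes "strict_mono_on {0..} g" "(a::real) \<ge> 0" "b \<ge> 0"
  shows "(g a - g b) * (a - b) \<ge> (0::real)"
proof (cases "a \<le> b")
  case True
  then have "g a \<le> g b" using assms strict_mono_on_leD by fastforce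
  then show ?thesis using True by (simp add: mult_nonpos_nonpos)
next
  case False
  then have "g b \<le> g a" using assms strict_mono_on_leD by fastforce
  then show ?thesis using False by simp
qed

lemma integrable_restrict_subset:
  fixes f :: "'a \<Rightarrow> real"
  assumes "A \<in> sets M" "B \<in> sets M" "B \<subseteq> A" "integrable (restrict_space M A) f"
  shows "integrable (restrict_space M B) f"
proof -
  have X: "integrable M (\<lambda>x. indicator A x *\<^sub>R f x)" using assms integrable_restrict_space[of A M f] by simp
  have "integrable M (\<lambda>x. indicator B x *\<^sub>R (indicator A x *\<^sub>R f x))"
    by (rule integrable_mult_indicator[OF assms(2) X])
  moreover have "(\<lambda>x. indicator B x *\<^sub>R (indicator A x *\<^sub>R f x)) = (\<lambda>x. indicator B x *\<^sub>R f x)"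
    unfolding indicator_def using assms(3) by (intro ext) auto
  ultimately show ?thesis using assms integrable_restrict_space[of B M f] by simp
qed

lemma bd_key:
  fixes hv kv r tu tv \<gamma>' :: real
  assumes "hv \<ge> 0" "kv \<ge> 0" "r \<ge> 0"
  shows "hv * (tu - tv) + (- tu + 1 powr \<gamma>' * hv powr r) * (hv - kv)
       - (kv * (tu - tv) + (- tv + 1 powr \<gamma>' * kv powr r) * (hv - kv)) \<ge> 0"
proof -
  have "(hv powr r - kv powr r) * (hv - kv) \<ge> 0"
  proof (cases "hv \<le> kv")
    case True
    then have "hv powr r \<le> kv powr r" using assms by (intro powr_mono2) auto
    then show ?thesis using True by (simp add: mult_nonpos_nonpos)
  next
    case False
    then have "kv powr r \<le> hv powr r" using assms by (intro powr_mono2) auto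
    then show ?thesis using False by simp
  qed
  then show ?thesis by (simp add: algebra_simps)
qed



theorem proposition4p1:
  fixes \<Omega> \<Gamma>D \<Gamma>N :: "(real^'n) set"
    and \<alpha> \<beta> \<gamma> \<gamma>' :: real
    and j :: "real^'n \<Rightarrow> real"
    and g :: "real \<Rightarrow> real"
    and H :: "real^'n \<Rightarrow> real^'n \<Rightarrow> real"
    and DpH :: "real^'n \<Rightarrow> real^'n \<Rightarrow> real^'n"
    and m u Tu h \<mu> v Tv k :: "real^'n \<Rightarrow> real"
    and Du Dv :: "real^'n \<Rightarrow> real^'n"
  assumes dom: "open \<Omega>" "bounded \<Omega>" "connected \<Omega>" "C1_boundary \<Omega>"
    and bdry: "openin (top_of_set (frontier \<Omega>)) \<Gamma>D" "openin (top_of_set (frontier \<Omega>)) \<Gamma>N"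
      "\<Gamma>D \<inter> \<Gamma>N = {}" "\<Gamma>D \<noteq> {}" "\<Gamma>N \<noteq> {}"
      "frontier \<Omega> = closure (\<Gamma>D \<union> \<Gamma>N)"
      "emeasure surface_measure \<Gamma>D > 0" "emeasure surface_measure \<Gamma>N > 0"
      "emeasure surface_measure ((closure \<Gamma>D - \<Gamma>D) \<inter> (closure \<Gamma>N - \<Gamma>N)) = 0"
    and expo: "\<alpha> > 1" "\<beta> > 0" "\<gamma> = (\<beta> + 1) / \<beta> * \<alpha>" "\<gamma>' = \<gamma> / (\<gamma> - 1)"
    and j: "Lp_on (restrict_space surface_measure \<Gamma>N) \<gamma>' j"
      "AE x in restrict_space surface_measure \<Gamma>N. j x \<ge> 0"
      "\<not> (AE x in restrict_space surface_measure \<Gamma>N. j x = 0)"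
    and g: "continuous_on {0..} g" "strict_mono_on {0..} g"
      "\<exists>C>1. \<forall>s\<ge>0. s powr \<beta> / C - C \<le> g s \<and> g s \<le> C * s powr \<beta> + C"
    and H_meas: "\<forall>p. (\<lambda>x. H x p) \<in> borel_measurable (lebesgue_on (closure \<Omega>))"
    and H_C1: "AE x in lebesgue_on (closure \<Omega>).
        convex_on UNIV (H x) \<and> continuous_on UNIV (DpH x) \<and>
        (\<forall>p. (H x has_derivative (\<lambda>q. DpH x p \<bullet> q)) (at p))"
    and H_growth: "\<exists>C>1.
        (AE x in lebesgue_on \<Omega>. \<forall>p. norm (DpH x p) \<le> C * norm p powr (\<alpha> - 1) + C \<and> H x 0 \<le> C) \<and>
        ((AE x in lebesgue_on \<Omega>. \<forall>p. H x p \<ge> norm p powr \<alpha> / C - C) \<or>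
         (AE x in lebesgue_on \<Omega>. \<forall>p. DpH x p \<bullet> p \<ge> norm p powr \<alpha> / C - C \<and> H x p \<ge> - C) \<or>
         (AE x in lebesgue_on \<Omega>. \<forall>p. - H x p + DpH x p \<bullet> p \<ge> norm p powr \<alpha> / C - C \<and> H x p \<ge> - C))"
    and X1: "in_Xplus \<Omega> \<Gamma>D \<beta> \<gamma> \<gamma>' m u Du Tu h"
    and X2: "in_Xplus \<Omega> \<Gamma>D \<beta> \<gamma> \<gamma>' \<mu> v Dv Tv k"
  shows "A_pairing \<Omega> \<Gamma>N \<Gamma>D H DpH g j \<gamma>' 1 m Du Tu h
           (\<lambda>x. m x - \<mu> x) (\<lambda>x. Du x - Dv x) (\<lambda>x. Tu x - Tv x) (\<lambda>x. h x - k x)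
       - A_pairing \<Omega> \<Gamma>N \<Gamma>D H DpH g j \<gamma>' 1 \<mu> Dv Tv k
           (\<lambda>x. m x - \<mu> x) (\<lambda>x. Du x - Dv x) (\<lambda>x. Tu x - Tv x) (\<lambda>x. h x - k x) \<ge> 0"
proof -
  let ?M = "lebesgue_on \<Omega>"
  let ?SM = "surface_measure :: (real^'n) measure"
  let ?S = "restrict_space ?SM \<Gamma>D"
  let ?F = "restrict_space ?SM (frontier \<Omega>)"
  note ef = expo_facts[OF expo(1-3)]
  have \<Omega>s: "\<Omega> \<in> sets lebesgue" using dom(1) by simp
  have \<Omega>l: "\<Omega> \<in> lmeasurable" using dom(1,2) by (simp add: lmeasurable_open)
  have cM: "complete_measure ?M" by (rule complete_lebesgue_on[OF \<Omega>s])
  interpret fin: finite_measure ?M by (rule finite_measure_lebesgue_on[OF \<Omega>l])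
  have cls: "closure \<Omega> \<in> sets lebesgue" by simp
  have AEtr: "AE x in ?M. P x" if "AE x in lebesgue_on (closure \<Omega>). P x" for P
  proof -
    have "AE x in lebesgue. x \<in> closure \<Omega> \<longrightarrow> P x"
      using that AE_restrict_space_iff[of "closure \<Omega>" lebesgue P] cls by simp
    then have "AE x in lebesgue. x \<in> \<Omega> \<longrightarrow> P x" by eventually_elim (use closure_subset in auto)
    then show ?thesis using AE_restrict_space_iff[of \<Omega> lebesgue P] \<Omega>s by simp
  qed
  have Hm: "(\<lambda>x. H x p) \<in> borel_measurable ?M" for p
    using H_meas measurable_restrict_mono closure_subset by blast
  have HC: "AE x in ?M. convex_on UNIV (H x) \<and> (\<forall>p. (H x has_derivative (\<lambda>q. DpH x p \<bullet> q)) (at p))"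
    using AEtr[OF H_C1] by eventually_elim auto
  have Hc: "AE x in ?M. continuous_on UNIV (H x)"
    using HC by eventually_elim (metis continuous_at_imp_continuous_on has_derivative_continuous)
  obtain C where C: "C > 1" and G1: "AE x in ?M. \<forall>p. norm (DpH x p) \<le> C * norm p powr (\<alpha> - 1) + C \<and> H x 0 \<le> C"
    and G2: "(AE x in ?M. \<forall>p. H x p \<ge> norm p powr \<alpha> / C - C) \<or>
         (AE x in ?M. \<forall>p. DpH x p \<bullet> p \<ge> norm p powr \<alpha> / C - C \<and> H x p \<ge> - C) \<or>
         (AE x in ?M. \<forall>p. - H x p + DpH x p \<bullet> p \<ge> norm p powr \<alpha> / C - C \<and> H x p \<ge> - C)"
    using H_growth by blast
  have G3: "AE x in ?M. \<forall>p. H x p \<ge> - C"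
    using G2
  proof (elim disjE)
    assume "AE x in ?M. \<forall>p. H x p \<ge> norm p powr \<alpha> / C - C"
    then show ?thesis
    proof eventually_elim
      case (elim x)
      show ?case
      proof
        fix p :: "real^'n"
        have "norm p powr \<alpha> / C \<ge> 0" using C by simp
        then show "H x p \<ge> - C" using elim[rule_format, of p] by linarith
      qed
    qed
  qed (auto elim: eventually_mono)
  obtain Cg where Cg: "Cg > 1" "\<forall>s\<ge>0. s powr \<beta> / Cg - Cg \<le> g s \<and> g s \<le> Cg * s powr \<beta> + Cg"
    using g(3) by blast
  have gb: "\<bar>g s\<bar> \<le> Cg * (s powr \<beta> + 1)" if "s \<ge> 0" for s
  proof -
    have "s powr \<beta> / Cg \<ge> 0" "Cg * s powr \<beta> \<ge> 0" using Cg by simp_all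
    moreover have "s powr \<beta> / Cg - Cg \<le> g s" "g s \<le> Cg * s powr \<beta> + Cg" using Cg(2) that by auto
    ultimately show ?thesis unfolding abs_le_iff by (simp add: algebra_simps)
  qed
  have m_m[measurable]: "m \<in> borel_measurable ?M" and m_i: "integrable ?M (\<lambda>x. \<bar>m x\<bar> powr (\<beta> + 1))"
    and Du_m[measurable]: "Du \<in> borel_measurable ?M" and Du_i: "integrable ?M (\<lambda>x. norm (Du x) powr \<gamma>)"
    and Tu_m: "Tu \<in> borel_measurable ?F" and Tu_i: "integrable ?F (\<lambda>x. \<bar>Tu x\<bar> powr \<gamma>)"
    and h_m[measurable]: "h \<in> borel_measurable ?S" and h_i: "integrable ?S (\<lambda>x. \<bar>h x\<bar> powr \<gamma>')"
    and m0: "AE x in ?M. m x \<ge> 0" and h0: "AE x in ?S. h x \<ge> 0"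
    using X1 unfolding in_Xplus_def W1p_def Lp_on_def trace_of_def by auto
  have \<mu>_m[measurable]: "\<mu> \<in> borel_measurable ?M" and \<mu>_i: "integrable ?M (\<lambda>x. \<bar>\<mu> x\<bar> powr (\<beta> + 1))"
    and Dv_m[measurable]: "Dv \<in> borel_measurable ?M" and Dv_i: "integrable ?M (\<lambda>x. norm (Dv x) powr \<gamma>)"
    and Tv_m: "Tv \<in> borel_measurable ?F" and Tv_i: "integrable ?F (\<lambda>x. \<bar>Tv x\<bar> powr \<gamma>)"
    and k_m[measurable]: "k \<in> borel_measurable ?S" and k_i: "integrable ?S (\<lambda>x. \<bar>k x\<bar> powr \<gamma>')"
    and \<mu>0: "AE x in ?M. \<mu> x \<ge> 0" and k0: "AE x in ?S. k x \<ge> 0"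
    using X2 unfolding in_Xplus_def W1p_def Lp_on_def trace_of_def by auto
  have sSM: "sets ?SM = sets borel" unfolding surface_measure_def hausdorff_measure_def
    using sets.sigma_sets_eq[of borel] by (simp add: sets_measure_of_conv)
  obtain U where U: "open U" "\<Gamma>D = frontier \<Omega> \<inter> U" using bdry(1) by (auto simp: openin_open)
  have GDs: "\<Gamma>D \<in> sets ?SM" using U sSM by auto
  have Fs: "frontier \<Omega> \<in> sets ?SM" using sSM by auto
  have GDsub: "\<Gamma>D \<subseteq> frontier \<Omega>" using U by auto
  have Tu_mS[measurable]: "Tu \<in> borel_measurable ?S" using measurable_restrict_mono[OF Tu_m GDsub] .
  have Tv_mS[measurable]: "Tv \<in> borel_measurable ?S" using measurable_restrict_mono[OF Tv_m GDsub] .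
  have Tu_iS: "integrable ?S (\<lambda>x. \<bar>Tu x\<bar> powr \<gamma>)" by (rule integrable_restrict_subset[OF Fs GDs GDsub Tu_i])
  have Tv_iS: "integrable ?S (\<lambda>x. \<bar>Tv x\<bar> powr \<gamma>)" by (rule integrable_restrict_subset[OF Fs GDs GDsub Tv_i])

  have gmax: "(\<lambda>s. g (max 0 s)) \<in> borel_measurable borel"
  proof (rule borel_measurable_continuous_onI)
    show "continuous_on UNIV (\<lambda>s. g (max 0 s))"
      by (rule continuous_on_compose2[OF g(1)]) (auto intro!: continuous_intros)
  qed
  have gm_m[measurable]: "(\<lambda>x. g (m x)) \<in> borel_measurable ?M"
  proof (rule measurable_AE_cong[OF cM])
    show "(\<lambda>x. g (max 0 (m x))) \<in> borel_measurable ?M" using measurable_compose[OF m_m gmax] by simp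
    show "AE x in ?M. g (max 0 (m x)) = g (m x)" using m0 by eventually_elim simp
  qed
  have g\<mu>_m[measurable]: "(\<lambda>x. g (\<mu> x)) \<in> borel_measurable ?M"
  proof (rule measurable_AE_cong[OF cM])
    show "(\<lambda>x. g (max 0 (\<mu> x))) \<in> borel_measurable ?M" using measurable_compose[OF \<mu>_m gmax] by simp
    show "AE x in ?M. g (max 0 (\<mu> x)) = g (\<mu> x)" using \<mu>0 by eventually_elim simp
  qed
  have Hu_m[measurable]: "(\<lambda>x. H x (Du x)) \<in> borel_measurable ?M" by (rule caratheodory[OF cM Hm Hc Du_m])
  have Hv_m[measurable]: "(\<lambda>x. H x (Dv x)) \<in> borel_measurable ?M" by (rule caratheodory[OF cM Hm Hc Dv_m])
  have lin: "linear (\<lambda>q. a \<bullet> q)" for a :: "real^'n" by (simp add: linear_iff inner_add_right)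
  have d1_m[measurable]: "(\<lambda>x. DpH x (Du x) \<bullet> (Du x - Dv x)) \<in> borel_measurable ?M"
  proof (rule measurable_AE_lim[OF cM])
    fix n
    have [measurable]: "(\<lambda>x. H x (Du x + inverse (real (Suc n)) *\<^sub>R (Du x - Dv x))) \<in> borel_measurable ?M"
      by (rule caratheodory[OF cM Hm Hc]) measurable
    show "(\<lambda>x. real (Suc n) * (H x (Du x + inverse (real (Suc n)) *\<^sub>R (Du x - Dv x)) - H x (Du x))) \<in> borel_measurable ?M"
      by measurable
  next
    show "AE x in ?M. (\<lambda>n. real (Suc n) * (H x (Du x + inverse (real (Suc n)) *\<^sub>R (Du x - Dv x)) - H x (Du x)))
            \<longlonglongrightarrow> DpH x (Du x) \<bullet> (Du x - Dv x)"
      using HC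
    proof eventually_elim
      case (elim x)
      then show ?case
        using dir_seq[where f="H x" and D="\<lambda>q. DpH x (Du x) \<bullet> q" and p="Du x" and w="Du x - Dv x", OF _ lin]
        by auto
    qed
  qed
  have d2_m[measurable]: "(\<lambda>x. DpH x (Dv x) \<bullet> (Du x - Dv x)) \<in> borel_measurable ?M"
  proof (rule measurable_AE_lim[OF cM])
    fix n
    have [measurable]: "(\<lambda>x. H x (Dv x + inverse (real (Suc n)) *\<^sub>R (Du x - Dv x))) \<in> borel_measurable ?M"
      by (rule caratheodory[OF cM Hm Hc]) measurable
    show "(\<lambda>x. real (Suc n) * (H x (Dv x + inverse (real (Suc n)) *\<^sub>R (Du x - Dv x)) - H x (Dv x))) \<in> borel_measurable ?M"
      by measurable
  next
    show "AE x in ?M. (\<lambda>n. real (Suc n) * (H x (Dv x + inverse (real (Suc n)) *\<^sub>R (Du x - Dv x)) - H x (Dv x)))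
            \<longlonglongrightarrow> DpH x (Dv x) \<bullet> (Du x - Dv x)"
      using HC
    proof eventually_elim
      case (elim x)
      then show ?case
        using dir_seq[where f="H x" and D="\<lambda>q. DpH x (Dv x) \<bullet> q" and p="Dv x" and w="Du x - Dv x", OF _ lin]
        by auto
    qed
  qed

  have C0: "C > 0" "Cg > 0" using C Cg by auto
  have good: "AE x in ?M. m x \<ge> 0 \<and> \<mu> x \<ge> 0 \<and> convex_on UNIV (H x) \<and>
      (\<forall>p. (H x has_derivative (\<lambda>q. DpH x p \<bullet> q)) (at p)) \<and>
      (\<forall>p. norm (DpH x p) \<le> C * norm p powr (\<alpha> - 1) + C \<and> H x 0 \<le> C) \<and> (\<forall>p. H x p \<ge> - C)"
    using m0 \<mu>0 HC G1 G3 by eventually_elim auto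
  let ?E = "\<lambda>x. \<bar>m x\<bar> powr (\<beta> + 1) + \<bar>\<mu> x\<bar> powr (\<beta> + 1) + norm (Du x) powr \<gamma> + norm (Dv x) powr \<gamma> + 1"
  have E_i: "integrable ?M ?E" by (intro Bochner_Integration.integrable_add m_i \<mu>_i Du_i Dv_i fin.integrable_const)
  have Epts: "AE x in ?M. m x powr (\<beta> + 1) \<le> ?E x \<and> \<mu> x powr (\<beta> + 1) \<le> ?E x \<and> norm (Du x) powr \<gamma> \<le> ?E x
      \<and> norm (Dv x) powr \<gamma> \<le> ?E x \<and> 1 \<le> ?E x"
    using m0 \<mu>0 by eventually_elim auto
  have nw: "norm (Du x - Dv x) \<le> norm (Du x) + norm (Dv x)" for x by (rule norm_triangle_ineq4)
  have f1_i: "integrable ?M (\<lambda>x. (- H x (Du x) + g (m x)) * (m x - \<mu> x))"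
  proof (rule Bochner_Integration.integrable_bound[where f="\<lambda>x. 12 * (C + Cg) * ?E x"])
    show "integrable ?M (\<lambda>x. 12 * (C + Cg) * ?E x)" using E_i by simp
    show "(\<lambda>x. (- H x (Du x) + g (m x)) * (m x - \<mu> x)) \<in> borel_measurable ?M" by measurable
    show "AE x in ?M. norm ((- H x (Du x) + g (m x)) * (m x - \<mu> x)) \<le> norm (12 * (C + Cg) * ?E x)"
      using good Epts
    proof eventually_elim
      case (elim x)
      have Hb: "\<bar>H x (Du x)\<bar> \<le> C * (2 + norm (Du x) powr \<alpha> + norm (Du x))"
        using H_bound[where Hx="H x" and D="DpH x" and p="Du x" and Ch=C] elim C0 by blast
      have "\<bar>(- H x (Du x) + g (m x)) * (m x - \<mu> x)\<bar> \<le> 12 * (C + Cg) * ?E x"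
        using f1_bound[OF expo(1-3), where a="m x" and b="\<mu> x" and n="norm (Du x)" and Ch=C and Cg=Cg]
          elim C0 Hb gb[of "m x"] by auto
      then show ?case by simp
    qed
  qed
  have g1_i: "integrable ?M (\<lambda>x. (- H x (Dv x) + g (\<mu> x)) * (m x - \<mu> x))"
  proof (rule Bochner_Integration.integrable_bound[where f="\<lambda>x. 12 * (C + Cg) * ?E x"])
    show "integrable ?M (\<lambda>x. 12 * (C + Cg) * ?E x)" using E_i by simp
    show "(\<lambda>x. (- H x (Dv x) + g (\<mu> x)) * (m x - \<mu> x)) \<in> borel_measurable ?M" by measurable
    show "AE x in ?M. norm ((- H x (Dv x) + g (\<mu> x)) * (m x - \<mu> x)) \<le> norm (12 * (C + Cg) * ?E x)"
      using good Epts
    proof eventually_elim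
      case (elim x)
      have Hb: "\<bar>H x (Dv x)\<bar> \<le> C * (2 + norm (Dv x) powr \<alpha> + norm (Dv x))"
        using H_bound[where Hx="H x" and D="DpH x" and p="Dv x" and Ch=C] elim C0 by blast
      have "\<bar>(- H x (Dv x) + g (\<mu> x)) * (m x - \<mu> x)\<bar> \<le> 12 * (C + Cg) * ?E x"
        using f1_bound[OF expo(1-3), where a="\<mu> x" and b="m x" and n="norm (Dv x)" and Ch=C and Cg=Cg]
          elim C0 Hb gb[of "\<mu> x"] by auto
      then show ?case by simp
    qed
  qed
  have f2_i: "integrable ?M (\<lambda>x. m x * (DpH x (Du x) \<bullet> (Du x - Dv x)))"
  proof (rule Bochner_Integration.integrable_bound[where f="\<lambda>x. 4 * C * ?E x"])
    show "integrable ?M (\<lambda>x. 4 * C * ?E x)" using E_i by simp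
    show "(\<lambda>x. m x * (DpH x (Du x) \<bullet> (Du x - Dv x))) \<in> borel_measurable ?M" by measurable
    show "AE x in ?M. norm (m x * (DpH x (Du x) \<bullet> (Du x - Dv x))) \<le> norm (4 * C * ?E x)"
      using good Epts
    proof eventually_elim
      case (elim x)
      have "\<bar>m x * (DpH x (Du x) \<bullet> (Du x - Dv x))\<bar> \<le> 4 * C * ?E x"
        using f2_bound[OF expo(1-3), where a="m x" and na="norm (Du x)" and nb="norm (Dv x)" and Ch=C
            and Dp="DpH x (Du x)" and w="Du x - Dv x"] elim C0 nw[of x] by auto
      then show ?case by simp
    qed
  qed
  have g2_i: "integrable ?M (\<lambda>x. \<mu> x * (DpH x (Dv x) \<bullet> (Du x - Dv x)))"
  proof (rule Bochner_Integration.integrable_bound[where f="\<lambda>x. 4 * C * ?E x"])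
    show "integrable ?M (\<lambda>x. 4 * C * ?E x)" using E_i by simp
    show "(\<lambda>x. \<mu> x * (DpH x (Dv x) \<bullet> (Du x - Dv x))) \<in> borel_measurable ?M" by measurable
    show "AE x in ?M. norm (\<mu> x * (DpH x (Dv x) \<bullet> (Du x - Dv x))) \<le> norm (4 * C * ?E x)"
      using good Epts
    proof eventually_elim
      case (elim x)
      have "norm (Du x - Dv x) \<le> norm (Dv x) + norm (Du x)" using nw[of x] by simp
      then have "\<bar>\<mu> x * (DpH x (Dv x) \<bullet> (Du x - Dv x))\<bar> \<le> 4 * C * ?E x"
        using f2_bound[OF expo(1-3), where a="\<mu> x" and na="norm (Dv x)" and nb="norm (Du x)" and Ch=C
            and Dp="DpH x (Dv x)" and w="Du x - Dv x"] elim C0 by auto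
      then show ?case by simp
    qed
  qed
  have Om: "integral\<^sup>L ?M (\<lambda>x. (- H x (Du x) + g (m x)) * (m x - \<mu> x)) + integral\<^sup>L ?M (\<lambda>x. m x * (DpH x (Du x) \<bullet> (Du x - Dv x)))
     - (integral\<^sup>L ?M (\<lambda>x. (- H x (Dv x) + g (\<mu> x)) * (m x - \<mu> x)) + integral\<^sup>L ?M (\<lambda>x. \<mu> x * (DpH x (Dv x) \<bullet> (Du x - Dv x)))) \<ge> 0"
  proof -
    have "0 \<le> integral\<^sup>L ?M (\<lambda>x. (- H x (Du x) + g (m x)) * (m x - \<mu> x) + m x * (DpH x (Du x) \<bullet> (Du x - Dv x))
       - ((- H x (Dv x) + g (\<mu> x)) * (m x - \<mu> x) + \<mu> x * (DpH x (Dv x) \<bullet> (Du x - Dv x))))"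
      using good
    proof (intro integral_nonneg_AE, eventually_elim)
      case (elim x)
      then show ?case
        using key_pt[where Hx="H x" and D="DpH x" and a="m x" and b="\<mu> x" and ga="g (m x)" and gb="g (\<mu> x)"
            and u="Du x" and v="Dv x"] g_mono_prod[OF g(2), of "m x" "\<mu> x"] by auto
    qed
    also have "\<dots> = integral\<^sup>L ?M (\<lambda>x. (- H x (Du x) + g (m x)) * (m x - \<mu> x)) + integral\<^sup>L ?M (\<lambda>x. m x * (DpH x (Du x) \<bullet> (Du x - Dv x)))
     - (integral\<^sup>L ?M (\<lambda>x. (- H x (Dv x) + g (\<mu> x)) * (m x - \<mu> x)) + integral\<^sup>L ?M (\<lambda>x. \<mu> x * (DpH x (Dv x) \<bullet> (Du x - Dv x))))"
      using f1_i f2_i g1_i g2_i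
      by (simp add: Bochner_Integration.integral_diff Bochner_Integration.integral_add)
    finally show ?thesis .
  qed

  let ?Eb = "\<lambda>x. \<bar>h x\<bar> powr \<gamma>' + \<bar>k x\<bar> powr \<gamma>' + \<bar>Tu x\<bar> powr \<gamma> + \<bar>Tv x\<bar> powr \<gamma>"
  have Eb_i: "integrable ?S ?Eb" by (intro Bochner_Integration.integrable_add h_i k_i Tu_iS Tv_iS)
  have goodb: "AE x in ?S. h x \<ge> 0 \<and> k x \<ge> 0" using h0 k0 by eventually_elim auto
  note bb = bd_bounds[OF ef(6) expo(4)]
  have a4_i: "integrable ?S (\<lambda>x. h x * (Tu x - Tv x))"
  proof (rule Bochner_Integration.integrable_bound[where f="\<lambda>x. 2 * ?Eb x"])
    show "integrable ?S (\<lambda>x. 2 * ?Eb x)" by (rule integrable_mult_right[OF Eb_i])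
    show "(\<lambda>x. h x * (Tu x - Tv x)) \<in> borel_measurable ?S" by measurable
    show "AE x in ?S. norm (h x * (Tu x - Tv x)) \<le> norm (2 * ?Eb x)"
      using goodb by eventually_elim (use bb in auto)
  qed
  have b4_i: "integrable ?S (\<lambda>x. k x * (Tu x - Tv x))"
  proof (rule Bochner_Integration.integrable_bound[where f="\<lambda>x. 2 * ?Eb x"])
    show "integrable ?S (\<lambda>x. 2 * ?Eb x)" by (rule integrable_mult_right[OF Eb_i])
    show "(\<lambda>x. k x * (Tu x - Tv x)) \<in> borel_measurable ?S" by measurable
    show "AE x in ?S. norm (k x * (Tu x - Tv x)) \<le> norm (2 * ?Eb x)"
      using goodb by eventually_elim (use bb in auto)
  qed
  have a5_i: "integrable ?S (\<lambda>x. (- Tu x + 1 powr \<gamma>' * h x powr (\<gamma>' - 1)) * (h x - k x))"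
  proof (rule Bochner_Integration.integrable_bound[where f="\<lambda>x. 4 * ?Eb x"])
    show "integrable ?S (\<lambda>x. 4 * ?Eb x)" by (rule integrable_mult_right[OF Eb_i])
    show "(\<lambda>x. (- Tu x + 1 powr \<gamma>' * h x powr (\<gamma>' - 1)) * (h x - k x)) \<in> borel_measurable ?S" by measurable
    show "AE x in ?S. norm ((- Tu x + 1 powr \<gamma>' * h x powr (\<gamma>' - 1)) * (h x - k x)) \<le> norm (4 * ?Eb x)"
      using goodb by eventually_elim (use bb in auto)
  qed
  have b5_i: "integrable ?S (\<lambda>x. (- Tv x + 1 powr \<gamma>' * k x powr (\<gamma>' - 1)) * (h x - k x))"
  proof (rule Bochner_Integration.integrable_bound[where f="\<lambda>x. 4 * ?Eb x"])
    show "integrable ?S (\<lambda>x. 4 * ?Eb x)" by (rule integrable_mult_right[OF Eb_i])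
    show "(\<lambda>x. (- Tv x + 1 powr \<gamma>' * k x powr (\<gamma>' - 1)) * (h x - k x)) \<in> borel_measurable ?S" by measurable
    show "AE x in ?S. norm ((- Tv x + 1 powr \<gamma>' * k x powr (\<gamma>' - 1)) * (h x - k x)) \<le> norm (4 * ?Eb x)"
      using goodb by eventually_elim (use bb in auto)
  qed
  have Bd: "integral\<^sup>L ?S (\<lambda>x. h x * (Tu x - Tv x)) + integral\<^sup>L ?S (\<lambda>x. (- Tu x + 1 powr \<gamma>' * h x powr (\<gamma>' - 1)) * (h x - k x))
     - (integral\<^sup>L ?S (\<lambda>x. k x * (Tu x - Tv x)) + integral\<^sup>L ?S (\<lambda>x. (- Tv x + 1 powr \<gamma>' * k x powr (\<gamma>' - 1)) * (h x - k x))) \<ge> 0"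
  proof -
    have "0 \<le> integral\<^sup>L ?S (\<lambda>x. h x * (Tu x - Tv x) + (- Tu x + 1 powr \<gamma>' * h x powr (\<gamma>' - 1)) * (h x - k x)
       - (k x * (Tu x - Tv x) + (- Tv x + 1 powr \<gamma>' * k x powr (\<gamma>' - 1)) * (h x - k x)))"
      using goodb
    proof (intro integral_nonneg_AE, eventually_elim)
      case (elim x)
      then show ?case using bd_key[of "h x" "k x" "\<gamma>' - 1" "Tu x" "Tv x" "\<gamma>'"] ef(6) expo(4) by auto
    qed
    also have "\<dots> = integral\<^sup>L ?S (\<lambda>x. h x * (Tu x - Tv x)) + integral\<^sup>L ?S (\<lambda>x. (- Tu x + 1 powr \<gamma>' * h x powr (\<gamma>' - 1)) * (h x - k x))
     - (integral\<^sup>L ?S (\<lambda>x. k x * (Tu x - Tv x)) + integral\<^sup>L ?S (\<lambda>x. (- Tv x + 1 powr \<gamma>' * k x powr (\<gamma>' - 1)) * (h x - k x)))"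
      using a4_i a5_i b4_i b5_i
      by (simp add: Bochner_Integration.integral_diff Bochner_Integration.integral_add)
    finally show ?thesis .
  qed
  show ?thesis unfolding A_pairing_def using Om Bd by linarith
qed

end
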